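(* If a graph $G$ is a $k$-AND-PCG, then its complement $\overline{G}$ is a $2k$-OR-PCG.
   Context: All trees are unrooted with edges weighted by nonnegative reals; $d_T(u,v)$ is the weight of the path between leaves $u,v$ of $T$. A graph $H$ is a PCG if there exist a tree $T$ with leaf set $V(H)$ and an interval $I$ of nonnegative reals such that $\{u,v\}\in E(H)$ iff $d_T(u,v)\in I$. A graph $G=(V,E)$ is a $k$-OR-PCG (resp. $k$-AND-PCG) if there exist $k$ PCGs $G_1,\ldots,G_k$ on vertex set $V$ with $E=\bigcup_i E(G_i)$ (resp. $E=\bigcap_i E(G_i)$). $\overline{G}$ denotes the complement graph. *)

theory Defs
  imports "HOL-Analysis.Analysis"
begin

definition pairs :: "'a set \<Rightarrow> 'a set set" where
  "pairs V = {e. \<exists>x y. e = {x, y} \<and> x \<noteq> y \<and> x \<in> V \<and> y \<in> V}"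

definition is_graph :: "'a set \<Rightarrow> 'a set set \<Rightarrow> bool" where
  "is_graph V E \<longleftrightarrow> finite V \<and> E \<subseteq> pairs V"

definition complement :: "'a set \<Rightarrow> 'a set set \<Rightarrow> 'a set set" where
  "complement V E = pairs V - E"

definition tree_path :: "'n set set \<Rightarrow> 'n \<Rightarrow> 'n \<Rightarrow> 'n list \<Rightarrow> bool" where
  "tree_path T u v p \<longleftrightarrow> p \<noteq> [] \<and> hd p = u \<and> last p = v \<and> distinct p \<and>
     (\<forall>i. Suc i < length p \<longrightarrow> {p ! i, p ! Suc i} \<in> T)"

definition is_tree :: "'n set \<Rightarrow> 'n set set \<Rightarrow> bool" where
  "is_tree N T \<longleftrightarrow> finite N \<and> N \<noteq> {} \<and> T \<subseteq> pairs N \<and>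
     (\<forall>u\<in>N. \<forall>v\<in>N. \<exists>!p. tree_path T u v p)"

definition leaves :: "'n set \<Rightarrow> 'n set set \<Rightarrow> 'n set" where
  "leaves N T = {x \<in> N. card {e \<in> T. x \<in> e} \<le> 1}"

definition tree_dist :: "'n set set \<Rightarrow> ('n set \<Rightarrow> real) \<Rightarrow> 'n \<Rightarrow> 'n \<Rightarrow> real" where
  "tree_dist T w u v =
     (let p = (THE p. tree_path T u v p)
      in (\<Sum>i<length p - 1. w {p ! i, p ! Suc i}))"

text \<open>Pairwise compatibility graphs. Internal tree nodes are drawn from a fresh copy of nat;
  the leaves of the tree are exactly the vertices of the graph (tagged with Inl).\<close>
definition is_pcg :: "'a set \<Rightarrow> 'a set set \<Rightarrow> bool" where
  "is_pcg V E \<longleftrightarrow> is_graph V E \<and>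
     (\<exists>(N :: ('a + nat) set) T w (I :: real set).
        is_tree N T \<and> leaves N T = Inl ` V \<and> (\<forall>e\<in>T. w e \<ge> 0) \<and>
        is_interval I \<and> I \<subseteq> {0..} \<and>
        (\<forall>u\<in>V. \<forall>v\<in>V. u \<noteq> v \<longrightarrow> ({u, v} \<in> E \<longleftrightarrow> tree_dist T w (Inl u) (Inl v) \<in> I)))"

definition k_or_pcg :: "nat \<Rightarrow> 'a set \<Rightarrow> 'a set set \<Rightarrow> bool" where
  "k_or_pcg k V E \<longleftrightarrow> (\<exists>G :: nat \<Rightarrow> 'a set set.
      (\<forall>i<k. is_pcg V (G i)) \<and> E = (\<Union>i<k. G i))"

definition k_and_pcg :: "nat \<Rightarrow> 'a set \<Rightarrow> 'a set set \<Rightarrow> bool" where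
  "k_and_pcg k V E \<longleftrightarrow> (\<exists>G :: nat \<Rightarrow> 'a set set.
      (\<forall>i<k. is_pcg V (G i)) \<and> E = {e \<in> pairs V. \<forall>i<k. e \<in> G i})"

end

theory Submission
  imports Defs
begin

lemma path_the:
  assumes "is_tree N T" "u \<in> N" "v \<in> N"
  shows "tree_path T u v (THE p. tree_path T u v p)"
  using assms unfolding is_tree_def by (metis theI')

lemma path_rev:
  assumes "tree_path T u v p"
  shows "tree_path T v u (rev p)"
  unfolding tree_path_def
proof (intro conjI allI impI)
  show "rev p \<noteq> []" "hd (rev p) = v" "last (rev p) = u" "distinct (rev p)"
    using assms unfolding tree_path_def by (auto simp: hd_rev last_rev)
  fix i assume i: "Suc i < length (rev p)"
  let ?n = "length p"
  have a: "rev p ! i = p ! Suc (?n - 1 - Suc i)" using i by (simp add: rev_nth Suc_diff_Suc)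
  have b: "rev p ! Suc i = p ! (?n - 1 - Suc i)" using i by (simp add: rev_nth)
  have "{p ! (?n - 1 - Suc i), p ! Suc (?n - 1 - Suc i)} \<in> T"
    using assms i unfolding tree_path_def by auto
  then show "{rev p ! i, rev p ! Suc i} \<in> T" using a b by (simp add: insert_commute)
qed

lemma dist_sym:
  assumes "is_tree N T" "u \<in> N" "v \<in> N"
  shows "tree_dist T w u v = tree_dist T w v u"
proof -
  define p where "p = (THE p. tree_path T u v p)"
  have pp: "tree_path T u v p" using path_the[OF assms] p_def by simp
  have q: "(THE p. tree_path T v u p) = rev p"
    using path_rev[OF pp] assms unfolding is_tree_def by (metis the1_equality)
  define m where "m = length p - 1"
  define g where "g j = w {p ! j, p ! Suc j}" for j
  have "tree_dist T w v u = (\<Sum>i<m. w {rev p ! i, rev p ! Suc i})"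
    unfolding tree_dist_def q m_def Let_def by simp
  also have "\<dots> = (\<Sum>i<m. g (m - Suc i))"
  proof (rule sum.cong)
    fix i assume "i \<in> {..<m}"
    then have i: "i < m" by simp
    have a: "rev p ! i = p ! Suc (m - Suc i)" using i unfolding m_def by (simp add: rev_nth Suc_diff_Suc)
    have b: "rev p ! Suc i = p ! (m - Suc i)" using i unfolding m_def by (simp add: rev_nth)
    show "w {rev p ! i, rev p ! Suc i} = g (m - Suc i)" unfolding g_def a b by (simp add: insert_commute)
  qed simp
  also have "\<dots> = (\<Sum>i<m. g i)" by (rule sum.nat_diff_reindex)
  also have "\<dots> = tree_dist T w u v" unfolding tree_dist_def p_def[symmetric] m_def g_def Let_def by simp
  finally show ?thesis by simp
qed

lemma dist_nonneg:
  assumes "is_tree N T" "u \<in> N" "v \<in> N" "\<forall>e\<in>T. w e \<ge> 0"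
  shows "tree_dist T w u v \<ge> 0"
proof -
  define p where "p = (THE p. tree_path T u v p)"
  have pp: "tree_path T u v p" using path_the[OF assms(1-3)] p_def by simp
  show ?thesis unfolding tree_dist_def p_def[symmetric] Let_def
    using pp assms(4) unfolding tree_path_def by (intro sum_nonneg) auto
qed

lemma pcg_from:
  fixes N :: "('a + nat) set" and V :: "'a set" and J :: "real set"
  assumes fin: "finite V" and tr: "is_tree N T" and lv: "leaves N T = Inl ` V"
    and w: "\<forall>e\<in>T. w e \<ge> 0" and J: "is_interval J" "J \<subseteq> {0..}"
  shows "is_pcg V {e\<in>pairs V. \<exists>u v. e = {u,v} \<and> u \<noteq> v \<and> tree_dist T w (Inl u) (Inl v) \<in> J}"
proof -
  let ?G = "{e\<in>pairs V. \<exists>u v. e = {u,v} \<and> u \<noteq> v \<and> tree_dist T w (Inl u) (Inl v) \<in> J}"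
  have gr: "is_graph V ?G"
    unfolding is_graph_def using fin by auto
  have inN: "Inl x \<in> N" if "x \<in> V" for x
    using lv that unfolding leaves_def by blast
  have iff: "\<forall>u\<in>V. \<forall>v\<in>V. u \<noteq> v \<longrightarrow> ({u, v} \<in> ?G
        \<longleftrightarrow> tree_dist T w (Inl u) (Inl v) \<in> J)"
  proof (intro ballI impI iffI)
    fix u v assume uv: "u \<in> V" "v \<in> V" "u \<noteq> v"
    {
      assume "{u, v} \<in> ?G"
      then obtain a b where ab: "{u,v} = {a,b}" "tree_dist T w (Inl a) (Inl b) \<in> J" by blast
      then have "(a = u \<and> b = v) \<or> (a = v \<and> b = u)" by (metis doubleton_eq_iff)
      then show "tree_dist T w (Inl u) (Inl v) \<in> J"
        using ab dist_sym[OF tr inN inN] uv by metis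
    }
    {
      assume "tree_dist T w (Inl u) (Inl v) \<in> J"
      then show "{u, v} \<in> ?G"
        using uv unfolding pairs_def by blast
    }
  qed
  show ?thesis unfolding is_pcg_def
    apply (rule conjI[OF gr])
    apply (rule exI[of _ N], rule exI[of _ T], rule exI[of _ w], rule exI[of _ J])
    using tr lv w J iff by blast
qed

lemma compl_pcg:
  assumes "is_pcg V G"
  shows "\<exists>A B. is_pcg V A \<and> is_pcg V B \<and> pairs V - G = A \<union> B"
proof -
  obtain N :: "('a + nat) set" and T w I where tr: "is_tree N T" and lv: "leaves N T = Inl ` (V::'a set)"
    and w: "\<forall>e\<in>T. w e \<ge> 0" and I: "is_interval (I::real set)" "I \<subseteq> {0..}"
    and iff: "\<forall>u\<in>V. \<forall>v\<in>V. u \<noteq> v \<longrightarrow> ({u, v} \<in> G \<longleftrightarrow> tree_dist T w (Inl u) (Inl v) \<in> I)"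
    and g: "is_graph V G"
    using assms unfolding is_pcg_def apply (elim conjE exE) apply (rule that) by assumption+
  have fin: "finite V" using g unfolding is_graph_def by simp
  define J1 where "J1 = {x::real. 0 \<le> x \<and> (\<forall>y\<in>I. x < y)}"
  define J2 where "J2 = {x::real. 0 \<le> x \<and> (\<forall>y\<in>I. y < x)}"
  have J1: "is_interval J1" "J1 \<subseteq> {0..}"
    unfolding J1_def is_interval_1 by (simp, meson le_less_trans order.trans) auto
  have J2: "is_interval J2" "J2 \<subseteq> {0..}"
    unfolding J2_def is_interval_1 by (simp, meson less_le_trans order.trans) auto
  have key: "x \<notin> I \<longleftrightarrow> x \<in> J1 \<or> x \<in> J2" if x0: "x \<ge> 0" for x
  proof
    assume "x \<notin> I"
    show "x \<in> J1 \<or> x \<in> J2"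
    proof (rule ccontr)
      assume "\<not> (x \<in> J1 \<or> x \<in> J2)"
      then obtain a b where "a \<in> I" "b \<in> I" "\<not> x < a" "\<not> b < x" using x0 unfolding J1_def J2_def by auto
      then have "x \<in> I" using I(1) unfolding is_interval_1 by (meson not_less)
      with \<open>x \<notin> I\<close> show False by simp
    qed
  next
    assume "x \<in> J1 \<or> x \<in> J2" then show "x \<notin> I" unfolding J1_def J2_def by auto
  qed
  have inN: "Inl x \<in> N" if "x \<in> V" for x
    using lv that unfolding leaves_def by blast
  let ?A = "{e\<in>pairs V. \<exists>u v. e = {u,v} \<and> u \<noteq> v \<and> tree_dist T w (Inl u) (Inl v) \<in> J1}"
  let ?B = "{e\<in>pairs V. \<exists>u v. e = {u,v} \<and> u \<noteq> v \<and> tree_dist T w (Inl u) (Inl v) \<in> J2}"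
  have "pairs V - G = ?A \<union> ?B"
  proof (intro set_eqI iffI)
    fix e assume e: "e \<in> pairs V - G"
    then obtain u v where uv: "e = {u,v}" "u \<noteq> v" "u \<in> V" "v \<in> V" unfolding pairs_def by blast
    have "tree_dist T w (Inl u) (Inl v) \<notin> I" using iff uv e by blast
    moreover have "tree_dist T w (Inl u) (Inl v) \<ge> 0" using dist_nonneg[OF tr inN inN w] uv by simp
    ultimately show "e \<in> ?A \<union> ?B" using key e uv by blast
  next
    fix e assume "e \<in> ?A \<union> ?B"
    then obtain u v where uv: "e = {u,v}" "u \<noteq> v" "e \<in> pairs V" and
      d: "tree_dist T w (Inl u) (Inl v) \<in> J1 \<or> tree_dist T w (Inl u) (Inl v) \<in> J2" by blast
    have "u \<in> V" "v \<in> V" using uv unfolding pairs_def by (auto simp: doubleton_eq_iff)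
    moreover have "tree_dist T w (Inl u) (Inl v) \<notin> I" using d key J1 J2 by blast
    ultimately show "e \<in> pairs V - G" using iff uv by blast
  qed
  then show ?thesis using pcg_from[OF fin tr lv w J1] pcg_from[OF fin tr lv w J2] by blast
qed

theorem theorem9:
  fixes V :: "'a set" and E :: "'a set set" and k :: nat
  assumes "is_graph V E"
    and "k_and_pcg k V E"
  shows "k_or_pcg (2 * k) V (complement V E)"
proof -
  obtain G where G: "\<forall>i<k. is_pcg V (G i)" and E: "E = {e \<in> pairs V. \<forall>i<k. e \<in> G i}"
    using assms(2) unfolding k_and_pcg_def by (elim exE conjE) (rule that)
  have "\<exists>AB. i < k \<longrightarrow> is_pcg V (fst AB) \<and> is_pcg V (snd AB) \<and> pairs V - G i = fst AB \<union> snd AB" for i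
  proof (cases "i < k")
    case True
    then obtain A B where "is_pcg V A" "is_pcg V B" "pairs V - G i = A \<union> B" using G compl_pcg by metis
    then show ?thesis by (intro exI[of _ "(A, B)"]) simp
  qed simp
  then obtain AB where AB: "\<And>i. i < k \<Longrightarrow> is_pcg V (fst (AB i)) \<and> is_pcg V (snd (AB i)) \<and> pairs V - G i = fst (AB i) \<union> snd (AB i)"
    by (metis (no_types))
  define H where "H j = (if j < k then fst (AB j) else snd (AB (j - k)))" for j
  show ?thesis unfolding k_or_pcg_def
  proof (intro exI conjI allI impI)
    fix j assume "j < 2 * k"
    then show "is_pcg V (H j)" unfolding H_def using AB by auto
  next
    show "complement V E = (\<Union>j<2 * k. H j)"
    proof (intro set_eqI iffI)
      fix e assume "e \<in> complement V E"
      then obtain i where i: "i < k" "e \<in> pairs V - G i" unfolding complement_def E by auto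
      then have "e \<in> H i \<or> e \<in> H (i + k)" using AB[OF i(1)] unfolding H_def by auto
      moreover have "i < 2 * k" "i + k < 2 * k" using i(1) by simp_all
      ultimately show "e \<in> (\<Union>j<2 * k. H j)" by blast
    next
      fix e assume "e \<in> (\<Union>j<2 * k. H j)"
      then obtain j where j: "j < 2 * k" "e \<in> H j" by blast
      show "e \<in> complement V E"
      proof (cases "j < k")
        case True
        then show ?thesis using j AB[OF True] unfolding H_def complement_def E by auto
      next
        case False
        then have "j - k < k" using j by simp
        then show ?thesis using j AB[OF \<open>j - k < k\<close>] False unfolding H_def complement_def E by auto
      qed
    qed
  qed
qed

end
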